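(* The projection of $\mathcal T_\rightarrow$ (and of $\mathcal T_\leftarrow$) onto the complex plane of the coordinate $z_2=-[z\cdot b]$ is the cut-plane $\mathbb C\setminus[-1,1]$. The image of $\mathcal T_\leftarrow\times\mathcal T_\rightarrow$ (and of $\mathcal T_\rightarrow\times\mathcal T_\leftarrow$) under $(z,z')\mapsto[z\cdot z']$ is the cut-plane $\mathbb C\setminus[-1,1]$.
   Context: $[z\cdot z']=z_0z'_0-z_1z'_1-z_2z'_2$ on $\mathbb C^3$, $z^2=[z\cdot z]$; $X^{(c)}=\{z\in\mathbb C^3:z^2=-1\}$, $z=x+iy$; $V^+=\{y\in\mathbb R^3:y^2>0,y_0>0\}$; fix $e\in V^+$; $\mathcal T_\rightarrow=\{z\in X^{(c)}:y^2<0,{\rm sgn}\det(e,x,y)=-1\}$, $\mathcal T_\leftarrow=\{z\in X^{(c)}:y^2<0,{\rm sgn}\det(e,x,y)=+1\}$; $b=(0,0,1)$. *)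

theory Defs
  imports "HOL-Analysis.Analysis"
begin

text \<open>Points of C^3 are complex^3 with coordinates z_0 = z$1, z_1 = z$2, z_2 = z$3.\<close>

definition mink :: "complex^3 \<Rightarrow> complex^3 \<Rightarrow> complex" where
  "mink z w = z$1 * w$1 - z$2 * w$2 - z$3 * w$3"

definition rmink :: "real^3 \<Rightarrow> real^3 \<Rightarrow> real" where
  "rmink x y = x$1 * y$1 - x$2 * y$2 - x$3 * y$3"

definition Xc :: "(complex^3) set" where
  "Xc = {z. mink z z = -1}"

definition rpart :: "complex^3 \<Rightarrow> real^3" where
  "rpart z = (\<chi> i. Re (z$i))"

definition ipart :: "complex^3 \<Rightarrow> real^3" where
  "ipart z = (\<chi> i. Im (z$i))"

definition Vplus :: "(real^3) set" where
  "Vplus = {y. rmink y y > 0 \<and> y$1 > 0}"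

definition det3 :: "real^3 \<Rightarrow> real^3 \<Rightarrow> real^3 \<Rightarrow> real" where
  "det3 a c d = det (vector [a, c, d] :: real^3^3)"

definition T_right :: "real^3 \<Rightarrow> (complex^3) set" where
  "T_right e = {z \<in> Xc. rmink (ipart z) (ipart z) < 0
                 \<and> sgn (det3 e (rpart z) (ipart z)) = -1}"

definition T_left :: "real^3 \<Rightarrow> (complex^3) set" where
  "T_left e = {z \<in> Xc. rmink (ipart z) (ipart z) < 0
                 \<and> sgn (det3 e (rpart z) (ipart z)) = 1}"

definition bvec :: "complex^3" where
  "bvec = vector [0, 0, 1]"

definition cut_plane :: "complex set" where
  "cut_plane = UNIV - {complex_of_real t | t. -1 \<le> t \<and> t \<le> 1}"

end

theory Submission
  imports Defs
begin


lemma det3_eq: "det3 a c d = a$1*(c$2*d$3 - c$3*d$2) - a$2*(c$1*d$3 - c$3*d$1) + a$3*(c$1*d$2 - c$2*d$1)"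
  unfolding det3_def det_3 by (simp add: algebra_simps)

lemma nz:
  fixes e X Y :: "real^3"
  assumes "e \<in> Vplus" "rmink X Y = 0" "rmink X X < 0" "rmink Y Y < 0"
  shows "det3 e X Y \<noteq> 0"
proof
  assume D: "det3 e X Y = 0"
  define n1 where "n1 = X$2*Y$3 - X$3*Y$2"
  define n2 where "n2 = X$3*Y$1 - X$1*Y$3"
  define n3 where "n3 = X$1*Y$2 - X$2*Y$1"
  have id: "n1^2 - n2^2 - n3^2 = rmink X X * rmink Y Y - (rmink X Y)^2"
    unfolding n1_def n2_def n3_def rmink_def by (simp add: power2_eq_square algebra_simps)
  have "rmink X X * rmink Y Y > 0" using assms(3,4) by (simp add: mult_neg_neg)
  hence pos: "n1^2 > n2^2 + n3^2" using id assms(2) by simp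
  have e: "e$1 > 0" "(e$1)^2 > (e$2)^2 + (e$3)^2" using assms(1) unfolding Vplus_def rmink_def
    by (auto simp: power2_eq_square)
  have eq: "e$1*n1 = -(e$2*n2 + e$3*n3)" using D unfolding det3_eq n1_def n2_def n3_def
    by (simp add: algebra_simps)
  have cs: "(e$2*n2+e$3*n3)^2 \<le> ((e$2)^2+(e$3)^2)*(n2^2+n3^2)"
  proof -
    have "0 \<le> (e$2*n3 - e$3*n2)^2" by simp
    thus ?thesis by (simp add: power2_eq_square algebra_simps)
  qed
  have n1p: "n1^2 > 0" using pos by (smt (verit) zero_le_power2)
  have "((e$2)^2+(e$3)^2)*(n2^2+n3^2) \<le> ((e$2)^2+(e$3)^2)*n1^2"
    using pos by (intro mult_left_mono) auto
  also have "\<dots> < (e$1)^2 * n1^2" using e n1p by (intro mult_strict_right_mono) auto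
  finally have "(e$2*n2+e$3*n3)^2 < (e$1*n1)^2" using cs by (simp add: power_mult_distrib)
  moreover have "(e$1*n1)^2 = (e$2*n2+e$3*n3)^2" using eq by (metis power2_minus)
  ultimately show False by simp
qed

lemma rmink_lin: "rmink (a *\<^sub>R u + b *\<^sub>R v) (c *\<^sub>R p + d *\<^sub>R q) =
   a*c*rmink u p + a*d*rmink u q + b*c*rmink v p + b*d*rmink v q"
  by (simp add: rmink_def algebra_simps)

lemma rmink_comm: "rmink u v = rmink v u" by (simp add: rmink_def algebra_simps)
lemma rmink_neg[simp]: "rmink (-u) v = - rmink u v" "rmink u (-v) = - rmink u v"
  by (simp_all add: rmink_def)
lemma det3_neg: "det3 e (-x) (-y) = det3 e x y" by (simp add: det3_eq)

lemma key0:
  fixes e x y x' y' :: "real^3"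
  assumes e: "e \<in> Vplus"
  and h1: "rmink x x - rmink y y = -1" "rmink x y = 0"
  and h2: "rmink x' x' - rmink y' y' = -1" "rmink x' y' = 0"
  and hy: "rmink y y < 0" "rmink y' y' < 0"
  and d: "det3 e x y > 0" "det3 e x' y' < 0"
  and im: "rmink x y' + rmink y x' = 0"
  and t: "\<bar>rmink x x' - rmink y y'\<bar> \<le> 1"
  and yy: "rmink y y' \<le> 0"
  shows False
proof -
  define X where "X = (\<lambda>s::real. (1-s) *\<^sub>R x + s *\<^sub>R x')"
  define Y where "Y = (\<lambda>s::real. (1-s) *\<^sub>R y + s *\<^sub>R y')"
  have cont: "continuous_on {0..1} (\<lambda>s. det3 e (X s) (Y s))"
    unfolding X_def Y_def det3_eq by (simp, intro continuous_intros)
  have f0: "det3 e (X 0) (Y 0) = det3 e x y" and f1: "det3 e (X 1) (Y 1) = det3 e x' y'"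
    by (simp_all add: X_def Y_def)
  obtain s where s: "0 \<le> s" "s \<le> 1" "det3 e (X s) (Y s) = 0"
    using IVT2'[of "\<lambda>s. det3 e (X s) (Y s)" 1 0 0] cont f0 f1 d by force
  define tt where "tt = rmink x x' - rmink y y'"
  have XY: "rmink (X s) (Y s) = 0"
    unfolding X_def Y_def rmink_lin using h1(2) h2(2) im
    by (simp add: rmink_comm[of x' y] algebra_simps)
      (metis add.commute distrib_left mult.commute mult_zero_right rmink_comm)
  have YY: "rmink (Y s) (Y s) = (1-s)^2 * rmink y y + 2 * s * (1 - s)*rmink y y' + s^2 * rmink y' y'"
    unfolding Y_def rmink_lin by (simp add: rmink_comm[of y' y] power2_eq_square algebra_simps)
  have XX: "rmink (X s) (X s) - rmink (Y s) (Y s) = -((1-s)^2 + s^2 - 2 * s * (1 - s)*tt)"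
  proof -
    have "rmink (X s) (X s) - rmink (Y s) (Y s) = (1-s)^2 * (rmink x x - rmink y y)
      + 2 * s * (1 - s)*(rmink x x' - rmink y y') + s^2 * (rmink x' x' - rmink y' y')"
      unfolding X_def Y_def rmink_lin by (simp add: rmink_comm[of y' y] rmink_comm[of x' x] power2_eq_square algebra_simps)
    thus ?thesis using h1(1) h2(1) tt_def by simp
  qed
  have Yneg: "rmink (Y s) (Y s) < 0"
  proof -
    have a: "2 * s * (1 - s)*rmink y y' \<le> 0" using s yy by (intro mult_nonneg_nonpos) auto
    have b: "(1-s)^2 * rmink y y + s^2 * rmink y' y' < 0"
    proof (cases "s = 0")
      case True thus ?thesis using hy by simp
    next
      case False
      hence "s^2 * rmink y' y' < 0" using hy by (simp add: mult_pos_neg)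
      moreover have "(1-s)^2 * rmink y y \<le> 0" using hy by (simp add: mult_nonneg_nonpos)
      ultimately show ?thesis by simp
    qed
    show ?thesis unfolding YY using a b by linarith
  qed
  have N: "(1-s)^2 + s^2 - 2 * s * (1 - s)*tt \<ge> 0"
  proof -
    have "s * (1 - s) \<ge> 0" using s by simp
    hence "s * (1 - s)*tt \<le> s * (1 - s)" using t tt_def
      by (metis abs_le_D1 mult.right_neutral mult_left_mono)
    moreover have "2 * s * (1 - s) \<le> (1-s)^2 + s^2"
    proof -
      have "0 \<le> (1 - 2 * s)^2" by simp
      thus ?thesis by (simp add: power2_eq_square algebra_simps)
    qed
    ultimately show ?thesis by simp
  qed
  have Xneg: "rmink (X s) (X s) < 0" using XX N Yneg by simp
  show False using nz[OF e XY Xneg Yneg] s(3) by simp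
qed



lemma key:
  fixes e x y x' y' :: "real^3"
  assumes e: "e \<in> Vplus"
  and h1: "rmink x x - rmink y y = -1" "rmink x y = 0"
  and h2: "rmink x' x' - rmink y' y' = -1" "rmink x' y' = 0"
  and hy: "rmink y y < 0" "rmink y' y' < 0"
  and d: "det3 e x y > 0" "det3 e x' y' < 0"
  and im: "rmink x y' + rmink y x' = 0"
  and t: "\<bar>rmink x x' - rmink y y'\<bar> \<le> 1"
  shows False
proof (cases "rmink y y' \<le> 0")
  case True thus False using key0[OF assms] by blast
next
  case False
  have A: "rmink x (-y') + rmink y (-x') = 0" using im by simp
  have B: "\<bar>rmink x (-x') - rmink y (-y')\<bar> \<le> 1" using t by simp
  have C: "rmink y (-y') \<le> 0" using False by simp
  have D: "rmink (-x') (-x') - rmink (-y') (-y') = -1" "rmink (-x') (-y') = 0" using h2 by simp_all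
  have E: "rmink (-y') (-y') < 0" "det3 e (-x') (-y') < 0" using hy d det3_neg[of e x' y'] by simp_all
  show False using key0[OF e h1 D hy(1) E(1) d(1) E(2) A B C] .
qed

lemma mink_parts:
  "Re (mink z w) = rmink (rpart z) (rpart w) - rmink (ipart z) (ipart w)"
  "Im (mink z w) = rmink (rpart z) (ipart w) + rmink (ipart z) (rpart w)"
  by (simp_all add: mink_def rmink_def rpart_def ipart_def algebra_simps)

lemma mink_comm: "mink z w = mink w z" by (simp add: mink_def algebra_simps)

lemma cut_iff: "w \<in> cut_plane \<longleftrightarrow> \<not> (Im w = 0 \<and> \<bar>Re w\<bar> \<le> 1)"
proof -
  have "(\<exists>t. w = complex_of_real t \<and> -1 \<le> t \<and> t \<le> 1) \<longleftrightarrow> (Im w = 0 \<and> \<bar>Re w\<bar> \<le> 1)"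
  proof
    assume "\<exists>t. w = complex_of_real t \<and> -1 \<le> t \<and> t \<le> 1"
    then obtain t where "w = complex_of_real t" "-1 \<le> t" "t \<le> 1" by blast
    thus "Im w = 0 \<and> \<bar>Re w\<bar> \<le> 1" by auto
  next
    assume h: "Im w = 0 \<and> \<bar>Re w\<bar> \<le> 1"
    show "\<exists>t. w = complex_of_real t \<and> -1 \<le> t \<and> t \<le> 1"
      by (rule exI[of _ "Re w"]) (use h in \<open>auto simp: complex_eq_iff\<close>)
  qed
  thus ?thesis unfolding cut_plane_def by blast
qed

lemma T_right_iff: "z \<in> T_right e \<longleftrightarrow> mink z z = -1 \<and> rmink (ipart z) (ipart z) < 0 \<and> det3 e (rpart z) (ipart z) < 0"
  unfolding T_right_def Xc_def by (simp add: sgn_if)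

lemma T_left_iff: "z \<in> T_left e \<longleftrightarrow> mink z z = -1 \<and> rmink (ipart z) (ipart z) < 0 \<and> det3 e (rpart z) (ipart z) > 0"
  unfolding T_left_def Xc_def by (simp add: sgn_if)

lemma Xc_real:
  assumes "mink z z = -1"
  shows "rmink (rpart z) (rpart z) - rmink (ipart z) (ipart z) = -1" "rmink (rpart z) (ipart z) = 0"
proof -
  show "rmink (rpart z) (rpart z) - rmink (ipart z) (ipart z) = -1"
    using arg_cong[OF assms, of Re] mink_parts(1)[of z z] by simp
  have "Im (mink z z) = 2 * rmink (rpart z) (ipart z)"
    using mink_parts(2)[of z z] rmink_comm[of "ipart z" "rpart z"] by simp
  thus "rmink (rpart z) (ipart z) = 0" using assms by simp
qed

lemma pair_sub:
  assumes e: "e \<in> Vplus" and z: "z \<in> T_left e" and z': "z' \<in> T_right e"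
  shows "mink z z' \<in> cut_plane"
proof (rule ccontr)
  assume "mink z z' \<notin> cut_plane"
  hence c: "Im (mink z z') = 0" "\<bar>Re (mink z z')\<bar> \<le> 1" unfolding cut_iff by auto
  from z have zz: "mink z z = -1" "rmink (ipart z) (ipart z) < 0" "det3 e (rpart z) (ipart z) > 0"
    by (auto simp: T_left_iff)
  from z' have zz': "mink z' z' = -1" "rmink (ipart z') (ipart z') < 0" "det3 e (rpart z') (ipart z') < 0"
    by (auto simp: T_right_iff)
  show False
    by (rule key[OF e Xc_real[OF zz(1)] Xc_real[OF zz'(1)] zz(2) zz'(2) zz(3) zz'(3)])
       (use c mink_parts[of z z'] in auto)
qed

lemma proj_sub:
  assumes "mink z z = -1" "rmink (ipart z) (ipart z) < 0"
  shows "z$3 \<in> cut_plane"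
proof (rule ccontr)
  assume "z$3 \<notin> cut_plane"
  hence c: "Im (z$3) = 0" "\<bar>Re (z$3)\<bar> \<le> 1" unfolding cut_iff by auto
  define x1 where "x1 = Re (z$1)"
  define x2 where "x2 = Re (z$2)"
  define x3 where "x3 = Re (z$3)"
  define y1 where "y1 = Im (z$1)"
  define y2 where "y2 = Im (z$2)"
  have r: "x1*x1 - x2*x2 - x3*x3 - (y1*y1 - y2*y2) = -1"
    using Xc_real(1)[OF assms(1)] c unfolding x1_def x2_def x3_def y1_def y2_def
    by (simp add: rmink_def rpart_def ipart_def)
  have i: "x1*y1 = x2*y2"
    using Xc_real(2)[OF assms(1)] c unfolding x1_def x2_def x3_def y1_def y2_def
    by (simp add: rmink_def rpart_def ipart_def)
  have yn: "y1*y1 < y2*y2"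
    using assms(2) c unfolding y1_def y2_def by (simp add: rmink_def ipart_def)
  have "x2*x2*(y2*y2) = (x2*y2)*(x2*y2)" by (simp add: algebra_simps)
  also have "\<dots> = (x1*y1)*(x1*y1)" using i by simp
  also have "\<dots> = x1*x1*(y1*y1)" by (simp add: algebra_simps)
  also have "\<dots> \<le> x1*x1*(y2*y2)" using yn by (intro mult_left_mono) auto
  finally have le: "x2*x2*(y2*y2) \<le> x1*x1*(y2*y2)" .
  have "y2*y2 > 0" using yn by (smt (verit) zero_le_square)
  hence "x2*x2 \<le> x1*x1" using le by (meson mult_le_cancel_right_pos)
  moreover have "\<bar>x3\<bar> * \<bar>x3\<bar> \<le> 1" using c unfolding x3_def by (intro mult_le_one) auto
  hence "x3*x3 \<le> 1" by simp
  ultimately show False using r yn by linarith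
qed


lemma rpart_nth[simp]: "rpart z $ i = Re (z $ i)" by (simp add: rpart_def)
lemma ipart_nth[simp]: "ipart z $ i = Im (z $ i)" by (simp add: ipart_def)

lemma proj_eq: "- mink z bvec = z$3" by (simp add: mink_def bvec_def)

lemma vec_mem:
  fixes a b :: complex
  assumes e: "e \<in> Vplus" and ab: "a^2 + b^2 = 1"
  shows "Re a * Im b - Re b * Im a < 0 \<Longrightarrow> (vector [0,a,b] :: complex^3) \<in> T_right e"
    and "Re a * Im b - Re b * Im a > 0 \<Longrightarrow> (vector [0,a,b] :: complex^3) \<in> T_left e"
proof -
  define z where "z = (vector [0,a,b] :: complex^3)"
  have e1: "e$1 > 0" using e by (simp add: Vplus_def)
  have m: "mink z z = -1" using ab unfolding z_def mink_def
    by (simp add: power2_eq_square algebra_simps)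
  have dd: "det3 e (rpart z) (ipart z) = e$1 * (Re a * Im b - Re b * Im a)"
    unfolding z_def det3_eq by simp
  have yy: "rmink (ipart z) (ipart z) = - (Im a * Im a) - Im b * Im b"
    unfolding z_def rmink_def by simp
  have yneg: "rmink (ipart z) (ipart z) < 0" if "Re a * Im b - Re b * Im a \<noteq> 0"
  proof -
    have "Im a \<noteq> 0 \<or> Im b \<noteq> 0" using that by auto
    hence "Im a * Im a + Im b * Im b > 0"
      by (simp add: sum_squares_gt_zero_iff)
    thus ?thesis using yy by simp
  qed
  show "Re a * Im b - Re b * Im a < 0 \<Longrightarrow> vector [0,a,b] \<in> T_right e"
    using m dd yneg e1 unfolding T_right_iff z_def[symmetric] by (simp add: mult_pos_neg)
  show "Re a * Im b - Re b * Im a > 0 \<Longrightarrow> vector [0,a,b] \<in> T_left e"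
    using m dd yneg e1 unfolding T_left_iff z_def[symmetric] by simp
qed

lemma mu_nz:
  assumes s: "s^2 = 1 - w^2" and w: "w \<in> cut_plane"
  shows "Re s * Im w - Re w * Im s \<noteq> 0"
proof
  assume mu: "Re s * Im w - Re w * Im s = 0"
  define a where "a = Re w"
  define b where "b = Im w"
  define c where "c = Re s"
  define d where "d = Im s"
  have r: "c*c - d*d = 1 - (a*a - b*b)" using arg_cong[OF s, of Re]
    unfolding a_def b_def c_def d_def by (simp add: power2_eq_square)
  have i: "c*d = -(a*b)" using arg_cong[OF s, of Im]
    unfolding a_def b_def c_def d_def by (simp add: power2_eq_square algebra_simps)
  have mu': "c*b = a*d" using mu unfolding a_def b_def c_def d_def by simp
  have "a*(d*d) = d*(c*b)" using mu' by (simp add: algebra_simps)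
  also have "\<dots> = b*(c*d)" by (simp add: algebra_simps)
  also have "\<dots> = -(a*(b*b))" using i by (simp add: algebra_simps)
  finally have z: "a*(b*b + d*d) = 0" by (simp add: algebra_simps)
  have wc: "\<not> (b = 0 \<and> \<bar>a\<bar> \<le> 1)" using w unfolding cut_iff a_def b_def by simp
  show False
  proof (cases "a = 0")
    case True
    show False
    proof (cases "c = 0")
      case True
      have "0 \<le> d*d" "0 \<le> b*b" by simp_all
      moreover have "- (d * d) = 1 + b * b" using r \<open>a = 0\<close> True by simp
      ultimately show False by linarith
    next
      case False
      hence "b = 0" using mu' \<open>a = 0\<close> by simp
      thus False using wc \<open>a = 0\<close> by simp
    qed
  next
    case False
    hence "b*b + d*d = 0" using z by simp
    hence "b = 0" "d = 0" by (simp_all add: sum_squares_eq_zero_iff)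
    hence "c*c = 1 - a*a" using r by simp
    moreover have "0 \<le> c*c" by simp
    ultimately have "a*a \<le> 1" by linarith
    hence "\<bar>a\<bar> \<le> 1" using abs_square_le_1[of a] by (simp add: power2_eq_square)
    thus False using wc \<open>b = 0\<close> by simp
  qed
qed


lemma proj_sup:
  assumes e: "e \<in> Vplus" and w: "w \<in> cut_plane"
  shows "w \<in> (\<lambda>z. - mink z bvec) ` T_right e" "w \<in> (\<lambda>z. - mink z bvec) ` T_left e"
proof -
  define s where "s = csqrt (1 - w^2)"
  have s2: "s^2 = 1 - w^2" unfolding s_def by simp
  define mu where "mu = Re s * Im w - Re w * Im s"
  have mu: "mu \<noteq> 0" using mu_nz[OF s2 w] mu_def by simp
  define a1 where "a1 = (if mu > 0 then -s else s)"
  define a2 where "a2 = (if mu > 0 then s else -s)"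
  have q1: "a1^2 + w^2 = 1" "a2^2 + w^2 = 1" using s2 by (simp_all add: a1_def a2_def)
  have "Re a1 * Im w - Re w * Im a1 < 0" using mu unfolding a1_def mu_def by auto
  hence "vector [0,a1,w] \<in> T_right e" by (rule vec_mem(1)[OF e q1(1)])
  thus "w \<in> (\<lambda>z. - mink z bvec) ` T_right e" by (rule rev_image_eqI) (simp add: proj_eq)
  have "Re a2 * Im w - Re w * Im a2 > 0" using mu unfolding a2_def mu_def by auto
  hence "vector [0,a2,w] \<in> T_left e" by (rule vec_mem(2)[OF e q1(2)])
  thus "w \<in> (\<lambda>z. - mink z bvec) ` T_left e" by (rule rev_image_eqI) (simp add: proj_eq)
qed

lemma pair_sup:
  assumes e: "e \<in> Vplus" and w: "w \<in> cut_plane"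
  shows "\<exists>z z'. z \<in> T_left e \<and> z' \<in> T_right e \<and> mink z z' = w"
proof -
  define s where "s = csqrt (1 - w^2)"
  have s2: "s^2 = 1 - w^2" unfolding s_def by simp
  define mu where "mu = Re s * Im w - Re w * Im s"
  have mu: "mu \<noteq> 0" using mu_nz[OF s2 w] mu_def by simp
  define c where "c = - w"
  define d where "d = (if mu > 0 then s else -s)"
  have cd: "c^2 + d^2 = 1" using s2 by (simp add: c_def d_def)
  define M where "M = Re c * Im d - Im c * Re d"
  have Mpos: "M > 0" using mu unfolding M_def c_def d_def mu_def by (auto simp: mult.commute)
  define N where "N = Re c * Re c + Im c * Im c + Re d * Re d + Im d * Im d"
  have N0: "N \<ge> 0" unfolding N_def by simp
  define q where "q = M / (N + M)"
  have qpos: "q > 0" unfolding q_def using Mpos N0 by simp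
  have qN: "q * N < M"
  proof -
    have "q * N = M * N / (N + M)" unfolding q_def by simp
    also have "\<dots> < M" using Mpos N0 by (simp add: divide_less_eq)
    finally show ?thesis .
  qed
  define p where "p = sqrt (1 + q^2)"
  have p2: "p^2 = 1 + q^2" unfolding p_def by simp
  have p1: "p \<ge> 1" unfolding p_def by simp
  define a where "a = complex_of_real p * c + \<i> * complex_of_real q * d"
  define b where "b = complex_of_real p * d - \<i> * complex_of_real q * c"
  have pq: "(complex_of_real p)^2 - (complex_of_real q)^2 = 1"
    using p2 by (metis add_diff_cancel_right' of_real_1 of_real_add of_real_power add.commute)
  have ab: "a^2 + b^2 = 1"
  proof -
    have "a^2 + b^2 = ((complex_of_real p)^2 - (complex_of_real q)^2) * (c^2 + d^2)"
      unfolding a_def b_def by (simp add: power2_eq_square algebra_simps)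
    thus ?thesis using pq cd by simp
  qed
  have ex: "Re a * Im b - Re b * Im a = (p*p + q*q) * M - p * q * N"
    unfolding a_def b_def M_def N_def by (simp add: algebra_simps)
  have "p * q * N < p * M" using qN p1 by (simp add: mult.assoc)
  also have "\<dots> \<le> (p*p) * M" using p1 Mpos by (simp add: mult_right_mono)
  also have "\<dots> \<le> (p*p + q*q) * M" using Mpos by (simp add: mult_right_mono)
  finally have "Re a * Im b - Re b * Im a > 0" using ex by simp
  hence zl: "vector [0,a,b] \<in> T_left e" by (rule vec_mem(2)[OF e ab])
  have pq2: "(complex_of_real p)^2 + (- (\<i> * complex_of_real q))^2 = 1"
    using pq by (simp add: power_mult_distrib)
  have "Re (complex_of_real p) * Im (- (\<i> * complex_of_real q)) - Re (- (\<i> * complex_of_real q)) * Im (complex_of_real p) < 0"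
    using p1 qpos by simp
  hence zr: "vector [0, complex_of_real p, - (\<i> * complex_of_real q)] \<in> T_right e"
    by (rule vec_mem(1)[OF e pq2])
  have "mink (vector [0,a,b]) (vector [0, complex_of_real p, - (\<i> * complex_of_real q)]) = - (((complex_of_real p)^2 - (complex_of_real q)^2) * c)"
    unfolding mink_def a_def b_def by (simp add: power2_eq_square algebra_simps)
  also have "\<dots> = w" using pq c_def by simp
  finally show ?thesis using zl zr by blast
qed

theorem proposition6:
  fixes e :: "real^3"
  assumes "e \<in> Vplus"
  shows "(\<lambda>z. - mink z bvec) ` T_right e = cut_plane
       \<and> (\<lambda>z. - mink z bvec) ` T_left e = cut_plane
       \<and> (\<lambda>(z, z'). mink z z') ` (T_left e \<times> T_right e) = cut_plane
       \<and> (\<lambda>(z, z'). mink z z') ` (T_right e \<times> T_left e) = cut_plane"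
proof (intro conjI)
  show "(\<lambda>z. - mink z bvec) ` T_right e = cut_plane"
  proof
    show "(\<lambda>z. - mink z bvec) ` T_right e \<subseteq> cut_plane"
      by (auto simp: proj_eq T_right_iff intro: proj_sub)
    show "cut_plane \<subseteq> (\<lambda>z. - mink z bvec) ` T_right e" using proj_sup(1)[OF assms] by blast
  qed
  show "(\<lambda>z. - mink z bvec) ` T_left e = cut_plane"
  proof
    show "(\<lambda>z. - mink z bvec) ` T_left e \<subseteq> cut_plane"
      by (auto simp: proj_eq T_left_iff intro: proj_sub)
    show "cut_plane \<subseteq> (\<lambda>z. - mink z bvec) ` T_left e" using proj_sup(2)[OF assms] by blast
  qed
  show "(\<lambda>(z, z'). mink z z') ` (T_left e \<times> T_right e) = cut_plane"
  proof
    show "(\<lambda>(z, z'). mink z z') ` (T_left e \<times> T_right e) \<subseteq> cut_plane"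
      using pair_sub[OF assms] by auto
    show "cut_plane \<subseteq> (\<lambda>(z, z'). mink z z') ` (T_left e \<times> T_right e)"
    proof
      fix w assume "w \<in> cut_plane"
      then obtain z z' where "z \<in> T_left e" "z' \<in> T_right e" "mink z z' = w"
        using pair_sup[OF assms] by blast
      thus "w \<in> (\<lambda>(z, z'). mink z z') ` (T_left e \<times> T_right e)"
        by (intro rev_image_eqI[of "(z, z')"]) auto
    qed
  qed
  show "(\<lambda>(z, z'). mink z z') ` (T_right e \<times> T_left e) = cut_plane"
  proof
    show "(\<lambda>(z, z'). mink z z') ` (T_right e \<times> T_left e) \<subseteq> cut_plane"
      by clarsimp (metis mink_comm pair_sub[OF assms])
    show "cut_plane \<subseteq> (\<lambda>(z, z'). mink z z') ` (T_right e \<times> T_left e)"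
    proof
      fix w assume "w \<in> cut_plane"
      then obtain z z' where "z \<in> T_left e" "z' \<in> T_right e" "mink z z' = w"
        using pair_sup[OF assms] by blast
      thus "w \<in> (\<lambda>(z, z'). mink z z') ` (T_right e \<times> T_left e)"
        by (intro rev_image_eqI[of "(z', z)"]) (auto simp: mink_comm)
    qed
  qed
qed

end
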